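(* Let $I$ be an irreducible numerical semigroup and $K\in\mathbb{N}$ such that $\mathrm{F}(I)+K$ is odd and $\mathrm{F}(I)\ge K+1$. Then $[\theta(I),I]$ contains at least one numerical semigroup $S$ with $\mathrm{l}(S)=K$ if and only if $\#(I\setminus\theta(I))\ge\lfloor K/2\rfloor$.
   Context: A numerical semigroup is a subset $S\subseteq\mathbb{N}$ closed under addition with $0\in S$ and $\mathbb{N}\setminus S$ finite; $\mathrm{F}(S)=\max(\mathbb{Z}\setminus S)$; $\langle X\rangle$ is the submonoid generated by $X$. Irreducible: not the intersection of two numerical semigroups properly containing it. $\mathrm{N}(S)=\{s\in S\mid s<\mathrm{F}(S)\}$, $\mathrm{L}(S)=\{x\in\mathbb{N}\setminus S\mid \mathrm{F}(S)-x\notin \mathrm{N}(S)\}$, $\mathrm{l}(S)=\#\mathrm{L}(S)$. $\Delta(S)=\{s\in S\mid s<\frac{\mathrm{F}(S)}{2}\}$, $\theta(S)=\langle\Delta(S)\rangle\cup\{\mathrm{F}(S)+1,\mathrm{F}(S)+2,\ldots\}$. $[A,B]$ is the set of numerical semigroups $X$ with $A\subseteq X\subseteq B$. *)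

theory Defs
  imports Main
begin

definition numerical_semigroup :: "nat set \<Rightarrow> bool" where
  "numerical_semigroup S \<longleftrightarrow> 0 \<in> S \<and> (\<forall>a\<in>S. \<forall>b\<in>S. a + b \<in> S) \<and> finite (UNIV - S)"

text \<open>Frobenius number: max of the integers not in S (negative integers are never in S), so -1 if S = N.\<close>
definition frob :: "nat set \<Rightarrow> int" where
  "frob S = (if S = UNIV then -1 else int (Max (UNIV - S)))"

definition irreducible_ns :: "nat set \<Rightarrow> bool" where
  "irreducible_ns S \<longleftrightarrow> numerical_semigroup S \<and>
     \<not> (\<exists>A B. numerical_semigroup A \<and> numerical_semigroup B \<and> S \<subset> A \<and> S \<subset> B \<and> S = A \<inter> B)"

inductive_set submonoid_gen :: "nat set \<Rightarrow> nat set" for X where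
  zero: "0 \<in> submonoid_gen X"
| add: "x \<in> X \<Longrightarrow> y \<in> submonoid_gen X \<Longrightarrow> x + y \<in> submonoid_gen X"

definition NS :: "nat set \<Rightarrow> nat set" where
  "NS S = {s \<in> S. int s < frob S}"

definition LS :: "nat set \<Rightarrow> nat set" where
  "LS S = {x. x \<notin> S \<and> \<not> (\<exists>n \<in> NS S. int n = frob S - int x)}"

definition lS :: "nat set \<Rightarrow> nat" where
  "lS S = card (LS S)"

definition Delta :: "nat set \<Rightarrow> nat set" where
  "Delta S = {s \<in> S. 2 * int s < frob S}"

definition theta :: "nat set \<Rightarrow> nat set" where
  "theta S = submonoid_gen (Delta S) \<union> {x. int x > frob S}"

definition ns_interval :: "nat set \<Rightarrow> nat set \<Rightarrow> nat set set" where
  "ns_interval A B = {X. numerical_semigroup X \<and> A \<subseteq> X \<and> X \<subseteq> B}"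

end

theory Submission
  imports Defs
begin

lemma ns_closed: "numerical_semigroup S \<Longrightarrow> a \<in> S \<Longrightarrow> b \<in> S \<Longrightarrow> a + b \<in> S"
  by (simp add: numerical_semigroup_def)
lemma ns_zero: "numerical_semigroup S \<Longrightarrow> 0 \<in> S"
  by (simp add: numerical_semigroup_def)
lemma ns_fin: "numerical_semigroup S \<Longrightarrow> finite (UNIV - S)"
  by (simp add: numerical_semigroup_def)

lemma frob_eq:
  assumes "numerical_semigroup S" "f \<notin> S" "\<And>x. f < x \<Longrightarrow> x \<in> S"
  shows "frob S = int f"
proof -
  have "S \<noteq> UNIV" using assms by auto
  moreover have "Max (UNIV - S) = f"
  proof (rule Max_eqI)
    show "finite (UNIV - S)" by (rule ns_fin[OF assms(1)])
    show "y \<le> f" if "y \<in> UNIV - S" for y using that assms(3) not_le by blast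
    show "f \<in> UNIV - S" using assms(2) by simp
  qed
  ultimately show ?thesis by (simp add: frob_def)
qed

lemma submonoid_sub: assumes "numerical_semigroup S" "X \<subseteq> S" shows "submonoid_gen X \<subseteq> S"
proof
  fix x assume "x \<in> submonoid_gen X" then show "x \<in> S"
    by induct (use assms in \<open>auto simp: numerical_semigroup_def\<close>)
qed

lemma top_subset:
  fixes E :: "nat set"
  assumes "finite E" "m \<le> card E"
  shows "\<exists>T \<subseteq> E. card T = m \<and> (\<forall>x\<in>T. \<forall>y\<in>E. y \<le> x \<longrightarrow> y \<in> T)"
  using assms(2)
proof (induction m)
  case 0 then show ?case by auto
next
  case (Suc m)
  then obtain T where T: "T \<subseteq> E" "card T = m" "\<forall>x\<in>T. \<forall>y\<in>E. y \<le> x \<longrightarrow> y \<in> T" by auto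
  have finT: "finite T" using T(1) assms(1) finite_subset by blast
  have "E - T \<noteq> {}"
  proof
    assume "E - T = {}"
    hence "E \<subseteq> T" by auto
    hence "card E \<le> card T" using finT card_mono by blast
    thus False using T(2) Suc.prems by simp
  qed
  define M where "M = Min (E - T)"
  have M: "M \<in> E - T" using \<open>E - T \<noteq> {}\<close> assms(1) unfolding M_def by (intro Min_in) auto
  have Mmax: "\<And>y. y \<in> E - T \<Longrightarrow> M \<le> y" using assms(1) unfolding M_def by auto
  show ?case
  proof (intro exI[of _ "insert M T"] conjI)
    show "insert M T \<subseteq> E" using M T by auto
    show "card (insert M T) = Suc m" using M T finT by simp
    show "\<forall>x\<in>insert M T. \<forall>y\<in>E. y \<le> x \<longrightarrow> y \<in> insert M T"
    proof (intro ballI impI)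
      fix x y assume x: "x \<in> insert M T" and y: "y \<in> E" and xy: "y \<le> x"
      show "y \<in> insert M T"
      proof (cases "x \<in> T")
        case True then show ?thesis using T(3) y xy by auto
      next
        case False
        hence "x = M" using x by auto
        show ?thesis
        proof (cases "y \<in> T")
          case False
          hence "M \<le> y" using Mmax y by auto
          thus ?thesis using \<open>x = M\<close> xy by auto
        qed auto
      qed
    qed
  qed
qed

lemma irr_sym:
  assumes irr: "irreducible_ns I" and fI: "f \<notin> I" and big: "\<And>x. f < x \<Longrightarrow> x \<in> I"
    and f1: "1 \<le> f" and x: "x \<notin> I" "2*x \<noteq> f"
  shows "f - x \<in> I"
proof (rule ccontr)
  assume nx: "f - x \<notin> I"
  have ns: "numerical_semigroup I" using irr by (simp add: irreducible_ns_def)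
  define P where "P = {y. y \<notin> I \<and> f - y \<notin> I \<and> 2*y \<noteq> f}"
  have xP: "x \<in> P" using x nx by (simp add: P_def)
  have finP: "finite P" using ns_fin[OF ns] by (rule finite_subset[rotated]) (auto simp: P_def)
  define h where "h = Max P"
  have hP: "h \<in> P" using finP xP unfolding h_def by (intro Max_in) auto
  have hmax: "\<And>y. y \<in> P \<Longrightarrow> y \<le> h" using finP unfolding h_def by auto
  have hle: "h \<le> f" using hP big not_le by (auto simp: P_def)
  have "f - h \<in> P" using hP hle by (auto simp: P_def)
  hence "f - h \<le> h" by (rule hmax)
  hence h2: "f < 2*h" using hP by (auto simp: P_def)
  have hf: "h \<noteq> f" using hP ns_zero[OF ns] by (auto simp: P_def)
  have key: "h + s \<in> I" if s: "s \<in> I" "s \<noteq> 0" for s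
  proof (rule ccontr)
    assume hs: "h + s \<notin> I"
    hence hsf: "h + s \<le> f" using big not_le by blast
    have "f - (h + s) \<notin> I"
    proof
      assume "f - (h + s) \<in> I"
      hence "f - (h + s) + s \<in> I" using ns_closed[OF ns] s by blast
      moreover have "f - (h + s) + s = f - h" using hsf by simp
      ultimately show False using hP by (simp add: P_def)
    qed
    hence "h + s \<in> P" using hs h2 by (auto simp: P_def)
    hence "h + s \<le> h" by (rule hmax)
    thus False using s by simp
  qed
  have nsA: "numerical_semigroup (insert h I)"
    unfolding numerical_semigroup_def
  proof (intro conjI ballI)
    show "0 \<in> insert h I" using ns_zero[OF ns] by simp
    show "finite (UNIV - insert h I)" using ns_fin[OF ns] by (rule finite_subset[rotated]) auto
    fix a b assume a: "a \<in> insert h I" and b: "b \<in> insert h I"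
    show "a + b \<in> insert h I"
    proof (cases "a = h")
      case True
      show ?thesis
      proof (cases "b = h")
        case True then show ?thesis using \<open>a = h\<close> h2 big by simp
      next
        case False
        then have "b \<in> I" using b by simp
        then show ?thesis using key[of b] \<open>a = h\<close> by (cases "b = 0") auto
      qed
    next
      case False
      then have aI: "a \<in> I" using a by simp
      show ?thesis
      proof (cases "b = h")
        case True then show ?thesis using key[of a] aI by (cases "a = 0") (auto simp: add.commute)
      next
        case False
        then have "b \<in> I" using b by simp
        then show ?thesis using ns_closed[OF ns aI] by simp
      qed
    qed
  qed
  have nsB: "numerical_semigroup (insert f I)"
    unfolding numerical_semigroup_def
  proof (intro conjI ballI)
    show "0 \<in> insert f I" using ns_zero[OF ns] by simp
    show "finite (UNIV - insert f I)" using ns_fin[OF ns] by (rule finite_subset[rotated]) auto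
    fix a b assume a: "a \<in> insert f I" and b: "b \<in> insert f I"
    show "a + b \<in> insert f I"
    proof (cases "a = 0 \<or> b = 0")
      case True then show ?thesis using a b by auto
    next
      case False
      show ?thesis
      proof (cases "a = f \<or> b = f")
        case True then show ?thesis using False big by auto
      next
        case False
        then show ?thesis using a b ns_closed[OF ns] by auto
      qed
    qed
  qed
  have "I \<subset> insert h I" using hP by (auto simp: P_def)
  moreover have "I \<subset> insert f I" using fI by auto
  moreover have "I = insert h I \<inter> insert f I" using hf hP by (auto simp: P_def)
  ultimately show False using irr nsA nsB unfolding irreducible_ns_def by blast
qed

locale irr =
  fixes I :: "nat set" and f :: nat
  assumes ns: "numerical_semigroup I" and fI: "f \<notin> I" and big: "\<And>x. f < x \<Longrightarrow> x \<in> I"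
    and f1: "1 \<le> f" and sym: "\<And>x. x \<notin> I \<Longrightarrow> 2*x \<noteq> f \<Longrightarrow> f - x \<in> I"
begin

definition "Dl = {s \<in> I. 2*s < f}"
definition "Th = submonoid_gen Dl \<union> {x. f < x}"

lemma Th_sub: "Th \<subseteq> I"
  using submonoid_sub[OF ns, of Dl] big by (auto simp: Th_def Dl_def)

lemma Dl_Th: "a \<in> Dl \<Longrightarrow> b \<in> Th \<Longrightarrow> a + b \<in> Th"
  by (auto simp: Th_def intro: submonoid_gen.add)

lemma E_bounds: assumes "x \<in> I" "x \<notin> Th" shows "x < f" "f < 2*x"
proof -
  show "x < f" using assms fI by (cases x f rule: linorder_cases) (auto simp: Th_def)
  show "f < 2*x"
  proof (rule ccontr)
    assume "\<not> f < 2*x"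
    hence "2*x < f \<or> 2*x = f" by auto
    thus False
    proof
      assume "2*x < f" hence "x \<in> Dl" using assms by (simp add: Dl_def)
      hence "x + 0 \<in> submonoid_gen Dl" by (rule submonoid_gen.add) (rule submonoid_gen.zero)
      thus False using assms by (simp add: Th_def)
    next
      assume "2*x = f" hence "x + x = f" by simp
      thus False using ns_closed[OF ns assms(1) assms(1)] fI by simp
    qed
  qed
qed

lemma E_fin: "finite (I - Th)"
  by (rule finite_subset[of _ "{..<f}"]) (auto dest: E_bounds)

lemma S_facts:
  assumes S: "numerical_semigroup S" "Th \<subseteq> S" "S \<subseteq> I"
  shows "frob S = int f" and "lS S = (if even f then 1 else 0) + 2 * card (I - S)"
proof -
  have bigS: "\<And>x. f < x \<Longrightarrow> x \<in> S" using S(2) by (auto simp: Th_def)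
  show fr: "frob S = int f" using frob_eq[OF S(1)] bigS fI S(3) by blast
  have L1: "LS S = {x. x \<notin> S \<and> f - x \<notin> S}"
  proof (intro set_eqI iffI)
    fix x assume "x \<in> LS S"
    hence x: "x \<notin> S" and nn: "\<not> (\<exists>n \<in> NS S. int n = int f - int x)"
      by (auto simp: LS_def fr)
    have "x \<le> f" using x bigS not_le by blast
    moreover have "x \<noteq> 0" using x ns_zero[OF S(1)] by metis
    ultimately have lt: "int (f - x) < int f" and eq: "int (f - x) = int f - int x" by simp_all
    have "f - x \<notin> S"
    proof
      assume "f - x \<in> S"
      hence "f - x \<in> NS S" using lt by (simp add: NS_def fr)
      thus False using nn eq by blast
    qed
    thus "x \<in> {x. x \<notin> S \<and> f - x \<notin> S}" using x by simp
  next
    fix x assume "x \<in> {x. x \<notin> S \<and> f - x \<notin> S}"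
    hence x: "x \<notin> S" and nx: "f - x \<notin> S" by auto
    have "x \<le> f" using x bigS not_le by blast
    have "\<not> (\<exists>n \<in> NS S. int n = int f - int x)"
    proof
      assume "\<exists>n \<in> NS S. int n = int f - int x"
      then obtain n where n: "n \<in> S" "int n = int f - int x" by (auto simp: NS_def)
      hence "n = f - x" using \<open>x \<le> f\<close> by simp
      thus False using n nx by simp
    qed
    thus "x \<in> LS S" using x by (simp add: LS_def fr)
  qed
  define D where "D = I - S"
  define C where "C = (if even f then {f div 2} else {})"
  have Dlt: "\<And>d. d \<in> D \<Longrightarrow> d < f \<and> d \<in> I" using E_bounds S(2) by (auto simp: D_def)
  have L2: "{x. x \<notin> S \<and> f - x \<notin> S} = C \<union> (D \<union> (\<lambda>d. f - d) ` D)"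
  proof (intro set_eqI iffI)
    fix x assume "x \<in> {x. x \<notin> S \<and> f - x \<notin> S}"
    hence x: "x \<notin> S" and nx: "f - x \<notin> S" by auto
    have xf: "x \<le> f" using x bigS not_le by blast
    show "x \<in> C \<union> (D \<union> (\<lambda>d. f - d) ` D)"
    proof (cases "x \<in> I")
      case True then show ?thesis using x by (simp add: D_def)
    next
      case False
      show ?thesis
      proof (cases "2*x = f")
        case True then show ?thesis by (auto simp: C_def)
      next
        case ne: False
        hence "f - x \<in> I" using sym False by blast
        hence "f - x \<in> D" using nx by (simp add: D_def)
        moreover have "x = f - (f - x)" using xf by simp
        ultimately show ?thesis by blast
      qed
    qed
  next
    fix x assume "x \<in> C \<union> (D \<union> (\<lambda>d. f - d) ` D)"
    then consider "x \<in> C" | "x \<in> D" | d where "d \<in> D" "x = f - d" by blast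
    then show "x \<in> {x. x \<notin> S \<and> f - x \<notin> S}"
    proof cases
      case 1
      hence ev: "even f" and xe: "x = f div 2" by (auto simp: C_def split: if_splits)
      hence xx: "x + x = f" by auto
      have "x \<notin> I" using ns_closed[OF ns, of x x] xx fI by auto
      moreover have "f - x = x" using xx by simp
      ultimately show ?thesis using S(3) by auto
    next
      case 2
      hence "x \<in> I" "x < f" "x \<notin> S" using Dlt by (auto simp: D_def)
      moreover have "f - x \<notin> I"
      proof
        assume "f - x \<in> I"
        hence "x + (f - x) \<in> I" using ns_closed[OF ns \<open>x \<in> I\<close>] by blast
        thus False using fI \<open>x < f\<close> by simp
      qed
      ultimately show ?thesis using S(3) by auto
    next
      case 3
      hence d: "d \<in> I" "d < f" "d \<notin> S" using Dlt by (auto simp: D_def)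
      have "x \<notin> I"
      proof
        assume "x \<in> I"
        hence "d + x \<in> I" using ns_closed[OF ns d(1)] by blast
        thus False using fI d(2) 3 by simp
      qed
      moreover have "f - x = d" using 3 d by simp
      ultimately show ?thesis using S(3) d by auto
    qed
  qed
  have finD: "finite D" using Dlt by (rule_tac finite_subset[of _ "{..<f}"]) auto
  have injD: "inj_on (\<lambda>d. f - d) D" using Dlt by (intro inj_onI) (metis diff_diff_cancel less_imp_le)
  have disj1: "D \<inter> (\<lambda>d. f - d) ` D = {}"
  proof (rule ccontr)
    assume "D \<inter> (\<lambda>d. f - d) ` D \<noteq> {}"
    then obtain d e where de: "d \<in> D" "e \<in> D" "d = f - e" by blast
    have "d + e \<in> I" using Dlt de ns_closed[OF ns] by blast
    moreover have "d + e = f" using de Dlt[OF de(2)] by simp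
    ultimately show False using fI by simp
  qed
  have CI: "C \<inter> I = {}"
  proof (rule ccontr)
    assume "C \<inter> I \<noteq> {}"
    then obtain c where c: "c \<in> C" "c \<in> I" by blast
    hence "c + c = f" by (auto simp: C_def split: if_splits)
    thus False using ns_closed[OF ns c(2) c(2)] fI by simp
  qed
  have disj2: "C \<inter> (D \<union> (\<lambda>d. f - d) ` D) = {}"
  proof (rule ccontr)
    assume "C \<inter> (D \<union> (\<lambda>d. f - d) ` D) \<noteq> {}"
    then obtain c where c: "c \<in> C" "c \<in> D \<union> (\<lambda>d. f - d) ` D" by blast
    have cc: "c + c = f" using c(1) by (auto simp: C_def split: if_splits)
    from c(2) show False
    proof
      assume "c \<in> D" thus False using CI c(1) Dlt by blast
    next
      assume "c \<in> (\<lambda>d. f - d) ` D"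
      then obtain d where "d \<in> D" "c = f - d" by blast
      hence "d = c" using cc Dlt by fastforce
      thus False using CI c(1) Dlt \<open>d \<in> D\<close> by blast
    qed
  qed
  have "card (C \<union> (D \<union> (\<lambda>d. f - d) ` D)) = card C + (card D + card D)"
    using disj1 disj2 finD injD
    by (simp add: card_Un_disjoint card_image C_def)
  moreover have "card C = (if even f then 1 else 0)" by (simp add: C_def)
  ultimately show "lS S = (if even f then 1 else 0) + 2 * card (I - S)"
    unfolding lS_def L1 L2 D_def by simp
qed

end

theorem proposition39:
  fixes I :: "nat set" and K :: nat
  assumes "irreducible_ns I"
    and "odd (frob I + int K)"
    and "frob I \<ge> int K + 1"
  shows "(\<exists>S \<in> ns_interval (theta I) I. lS S = K) \<longleftrightarrow> card (I - theta I) \<ge> K div 2"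
proof -
  have ns: "numerical_semigroup I" using assms(1) by (simp add: irreducible_ns_def)
  have nU: "I \<noteq> UNIV" using assms(3) by (auto simp: frob_def)
  define f where "f = Max (UNIV - I)"
  have fin: "finite (UNIV - I)" by (rule ns_fin[OF ns])
  have ne: "UNIV - I \<noteq> {}" using nU by auto
  have fI: "f \<notin> I" using Max_in[OF fin ne] unfolding f_def by auto
  have big: "\<And>x. f < x \<Longrightarrow> x \<in> I" using Max_ge[OF fin] unfolding f_def by (meson DiffI UNIV_I not_le)
  have frobI: "frob I = int f" using nU by (simp add: frob_def f_def)
  have f1: "1 \<le> f" using assms(3) frobI by simp
  have sym: "\<And>x. x \<notin> I \<Longrightarrow> 2*x \<noteq> f \<Longrightarrow> f - x \<in> I"
    using irr_sym[OF assms(1) fI big f1] by blast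
  interpret irr I f using ns fI big f1 sym by unfold_locales blast+
  have "{s \<in> I. 2 * int s < int f} = {s \<in> I. 2 * s < f}" by auto
  hence thetaI: "theta I = Th" by (simp add: theta_def Th_def Dl_def Delta_def frobI)
  have "odd (int (f + K))" using assms(2) frobI by simp
  hence oddfK: "odd (f + K)" by simp
  have par: "K = (if even f then 1 else 0) + 2 * (K div 2)" using oddfK by presburger
  show ?thesis
  proof
    assume "\<exists>S\<in>ns_interval (theta I) I. lS S = K"
    then obtain S where S: "numerical_semigroup S" "Th \<subseteq> S" "S \<subseteq> I" "lS S = K"
      by (auto simp: ns_interval_def thetaI)
    have "card (I - S) = K div 2" using S_facts(2)[OF S(1-3)] S(4) par by simp
    moreover have "card (I - S) \<le> card (I - Th)" using S(2) E_fin by (intro card_mono) auto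
    ultimately show "K div 2 \<le> card (I - theta I)" by (simp add: thetaI)
  next
    assume "K div 2 \<le> card (I - theta I)"
    then obtain T where T: "T \<subseteq> I - Th" "card T = K div 2" "\<forall>x\<in>T. \<forall>y\<in>I - Th. y \<le> x \<longrightarrow> y \<in> T"
      using top_subset[OF E_fin, of "K div 2"] by (auto simp: thetaI)
    define S where "S = I - T"
    have nsS: "numerical_semigroup S"
      unfolding numerical_semigroup_def
    proof (intro conjI ballI)
      show "0 \<in> S" using ns_zero[OF ns] T(1) by (auto simp: S_def Th_def intro: submonoid_gen.zero)
      show "finite (UNIV - S)"
        using fin finite_subset[OF T(1) E_fin] by (rule_tac finite_subset[of _ "(UNIV - I) \<union> T"]) (auto simp: S_def)
      fix a b assume a: "a \<in> S" and b: "b \<in> S"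
      have aI: "a \<in> I" and bI: "b \<in> I" and aT: "a \<notin> T" and bT: "b \<notin> T" using a b by (auto simp: S_def)
      have abI: "a + b \<in> I" using ns_closed[OF ns aI bI] .
      show "a + b \<in> S"
      proof (rule ccontr)
        assume "a + b \<notin> S"
        hence abT: "a + b \<in> T" using abI by (simp add: S_def)
        hence abE: "a + b \<in> I" "a + b \<notin> Th" using T(1) by auto
        have abf: "a + b < f" using E_bounds[OF abE] by simp
        have gen: False if u: "u \<in> I" "v \<in> I" "u \<notin> T" "v \<notin> T" "2*u < f" "u + v \<in> T" for u v
        proof -
          have uD: "u \<in> Dl" using u by (simp add: Dl_def)
          show False
          proof (cases "v \<in> Th")
            case True
            then have "u + v \<in> Th" using Dl_Th[OF uD] by blast
            then show False using T(1) u(6) by auto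
          next
            case False
            then have "v \<in> I - Th" using u(2) by simp
            moreover have "u + v \<in> T" "v \<le> u + v" using u(6) by auto
            ultimately have "v \<in> T" using bspec[OF bspec[OF T(3) \<open>u + v \<in> T\<close>] \<open>v \<in> I - Th\<close>] by simp
            then show False using u(4) by simp
          qed
        qed
        show False
        proof (cases "2*a < f")
          case True then show False using gen[of a b] aI bI aT bT abT by blast
        next
          case False
          show False
          proof (cases "2*b < f")
            case True then show False using gen[of b a] aI bI aT bT abT by (simp add: add.commute)
          next
            case False
            then show False using \<open>\<not> 2*a < f\<close> abf by simp
          qed
        qed
      qed
    qed
    have sub: "Th \<subseteq> S" "S \<subseteq> I" using T(1) Th_sub by (auto simp: S_def)
    have "I - S = T" using T(1) by (auto simp: S_def)
    then have "lS S = K" using S_facts(2)[OF nsS sub] T(2) par by simp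
    then show "\<exists>S\<in>ns_interval (theta I) I. lS S = K"
      using nsS sub by (auto simp: ns_interval_def thetaI)
  qed
qed

end
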